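(* Let $f:[0,1]\to\mathbb{R}$ be a piecewise $C^1$, concave, non-negative function which is not identically zero, and let $$\Omega=\{(y_1,y_2)\in\mathbb{R}^2: 0\le y_1\le 1,\ |y_2|\le f(y_1)\}.$$ Let $a=\min\{\tau\in[0,1]: f(\tau)=\max_{[0,1]}f\}$ and $b=\max\{\tau\in[0,1]: f(\tau)=\max_{[0,1]}f\}$. Then $$uf(\Omega)\subset\{(y_1,0)\in\Omega: a/2\le y_1\le (1+b)/2\}.$$
   Context: Minimal unfolded region: for $v\in S^1$ and $c\in\mathbb{R}$ let $I_{v,c}$ be the reflection in the line $\{z: z\cdot v=c\}$, $\Omega^+_{v,a}=\Omega\cap\{z\cdot v\ge a\}$, $\Omega^-_{v,a}=\Omega\cap\{z\cdot v\le a\}$, $u(v)=\inf\{b: I_{v,c}(\Omega^+_{v,c})\subset\Omega\ \forall c\ge b\}$, $l(v)=\sup\{b: I_{v,c}(\Omega^-_{v,c})\subset\Omega\ \forall c\le b\}$, and $uf(\Omega)=\bigcap_{v\in S^1}\{z\in\mathbb{R}^2: l(v)\le z\cdot v\le u(v)\}$. *)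

theory Defs
  imports "HOL-Analysis.Analysis"
begin

definition refl_line :: "real \<times> real \<Rightarrow> real \<Rightarrow> real \<times> real \<Rightarrow> real \<times> real" where
  "refl_line v c z = z - (2 * (z \<bullet> v - c)) *\<^sub>R v"

definition upper_part :: "(real \<times> real) set \<Rightarrow> real \<times> real \<Rightarrow> real \<Rightarrow> (real \<times> real) set" where
  "upper_part \<Omega> v a = \<Omega> \<inter> {z. z \<bullet> v \<ge> a}"

definition lower_part :: "(real \<times> real) set \<Rightarrow> real \<times> real \<Rightarrow> real \<Rightarrow> (real \<times> real) set" where
  "lower_part \<Omega> v a = \<Omega> \<inter> {z. z \<bullet> v \<le> a}"

definition u_val :: "(real \<times> real) set \<Rightarrow> real \<times> real \<Rightarrow> real" where
  "u_val \<Omega> v = Inf {b. \<forall>c\<ge>b. refl_line v c ` upper_part \<Omega> v c \<subseteq> \<Omega>}"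

definition l_val :: "(real \<times> real) set \<Rightarrow> real \<times> real \<Rightarrow> real" where
  "l_val \<Omega> v = Sup {b. \<forall>c\<le>b. refl_line v c ` lower_part \<Omega> v c \<subseteq> \<Omega>}"

definition unfolded :: "(real \<times> real) set \<Rightarrow> (real \<times> real) set" where
  "unfolded \<Omega> = (\<Inter>v\<in>{v. norm v = 1}. {z. l_val \<Omega> v \<le> z \<bullet> v \<and> z \<bullet> v \<le> u_val \<Omega> v})"

end

theory Submission
  imports Defs
begin

lemma u_le:
  fixes \<Omega> :: "(real \<times> real) set"
  assumes "0 \<in> \<Omega>" "\<forall>z\<in>\<Omega>. norm z \<le> R" "norm v = 1"
    "\<forall>c\<ge>c0. refl_line v c ` upper_part \<Omega> v c \<subseteq> \<Omega>"
  shows "u_val \<Omega> v \<le> c0"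
proof -
  have R0: "R \<ge> 0" using assms(1,2) by force
  have "bdd_below {b. \<forall>c\<ge>b. refl_line v c ` upper_part \<Omega> v c \<subseteq> \<Omega>}"
    unfolding bdd_below_def
  proof (intro exI[of _ "-R/2"] ballI)
    fix b assume b: "b \<in> {b. \<forall>c\<ge>b. refl_line v c ` upper_part \<Omega> v c \<subseteq> \<Omega>}"
    show "- R / 2 \<le> b"
    proof (cases "b \<ge> 0")
      case True then show ?thesis using R0 by simp
    next
      case False
      have "0 \<in> upper_part \<Omega> v b" using False assms(1) by (simp add: upper_part_def)
      hence "refl_line v b 0 \<in> \<Omega>" using b by blast
      hence "norm (refl_line v b 0) \<le> R" using assms(2) by blast
      moreover have "refl_line v b 0 = (2*b) *\<^sub>R v" by (simp add: refl_line_def)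
      ultimately have "\<bar>2*b\<bar> \<le> R" using assms(3) by simp
      then show ?thesis by simp
    qed
  qed
  then show ?thesis unfolding u_val_def using assms(4) by (intro cInf_lower) auto
qed

lemma unfolded_le:
  "z \<in> unfolded \<Omega> \<Longrightarrow> norm v = 1 \<Longrightarrow> z \<bullet> v \<le> u_val \<Omega> v"
  unfolding unfolded_def by blast

theorem lemma4p6:
  fixes f :: "real \<Rightarrow> real" and \<Omega> :: "(real \<times> real) set" and a b :: real
  assumes "f piecewise_C1_differentiable_on {0..1}"
    and "concave_on {0..1} f"
    and "\<forall>x\<in>{0..1}. f x \<ge> 0"
    and "\<exists>x\<in>{0..1}. f x \<noteq> 0"
    and "\<Omega> = {(y1, y2). 0 \<le> y1 \<and> y1 \<le> 1 \<and> \<bar>y2\<bar> \<le> f y1}"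
    and "a = Inf {\<tau>\<in>{0..1}. f \<tau> = (SUP t\<in>{0..1}. f t)}"
    and "b = Sup {\<tau>\<in>{0..1}. f \<tau> = (SUP t\<in>{0..1}. f t)}"
  shows "unfolded \<Omega> \<subseteq> {(y1, y2). (y1, y2) \<in> \<Omega> \<and> y2 = 0 \<and> a / 2 \<le> y1 \<and> y1 \<le> (1 + b) / 2}"
proof -
  have cont: "continuous_on {0..1} f" using assms(1) by (simp add: piecewise_C1_differentiable_on_def)
  define M where "M = (SUP t\<in>{0..1}. f t)"
  define S where "S = {\<tau>\<in>{0..1}. f \<tau> = M}"
  obtain x0 where x0: "x0 \<in> {0..1}" "\<forall>y\<in>{0..1}. f y \<le> f x0"
    using continuous_attains_sup[of "{0..1::real}" f] cont by auto
  have bdd: "bdd_above (f ` {0..1})"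
    using x0 by (auto simp: bdd_above_def)
  have Mx0: "M = f x0" unfolding M_def
    by (rule antisym, rule cSUP_least) (use x0 bdd in \<open>auto intro: cSUP_upper\<close>)
  have fleM: "\<And>t. t \<in> {0..1} \<Longrightarrow> f t \<le> M" using x0 Mx0 by auto
  have Sne: "S \<noteq> {}" using x0 Mx0 S_def by auto
  have Scl: "closed S" unfolding S_def
    by (rule continuous_closed_preimage_constant[OF cont]) simp
  have Sbd: "bdd_below S" "bdd_above S" unfolding S_def by (auto intro: bdd_belowI[of _ 0] bdd_aboveI[of _ 1])
  have aS: "a \<in> S" using closed_contains_Inf[OF Sne Sbd(1) Scl] assms(6) S_def M_def by simp
  have bS: "b \<in> S" using closed_contains_Sup[OF Sne Sbd(2) Scl] assms(7) S_def M_def by simp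
  have a01: "0 \<le> a" "a \<le> 1" and fa: "f a = M" using aS S_def by auto
  have b01: "0 \<le> b" "b \<le> 1" and fb: "f b = M" using bS S_def by auto
  have decr: "f y \<le> f x" if "b \<le> x" "x \<le> y" "y \<le> 1" for x y
  proof (cases "y = b")
    case True then show ?thesis using that by simp
  next
    case False
    hence yb: "y > b" using that by simp
    define t where "t = (x - b) / (y - b)"
    have t: "0 \<le> t" "t \<le> 1" using that yb by (auto simp: t_def field_simps)
    have "t * (y - b) = x - b" using yb by (simp add: t_def)
    hence xe: "(1 - t) *\<^sub>R b + t *\<^sub>R y = x" by (simp add: algebra_simps)
    have "f ((1 - t) *\<^sub>R b + t *\<^sub>R y) \<ge> (1 - t) * f b + t * f y"
      by (rule concave_onD[OF assms(2) t]) (use that b01 in auto)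
    moreover have "f y \<le> f b" using fleM fb that b01 by auto
    ultimately have "f x \<ge> (1 - t) * f b + t * f y" using xe by simp
    moreover have "(1 - t) * f b + t * f y \<ge> (1-t) * f y + t * f y"
      using \<open>f y \<le> f b\<close> t by (intro add_right_mono mult_left_mono) auto
    ultimately show ?thesis by (simp add: algebra_simps)
  qed
  have incr: "f y \<le> f x" if "0 \<le> y" "y \<le> x" "x \<le> a" for x y
  proof (cases "y = a")
    case True then show ?thesis using that by simp
  next
    case False
    hence ya: "y < a" using that by simp
    define t where "t = (a - x) / (a - y)"
    have t: "0 \<le> t" "t \<le> 1" using that ya by (auto simp: t_def field_simps)
    have "t * (a - y) = a - x" using ya by (simp add: t_def)
    hence xe: "(1 - t) *\<^sub>R a + t *\<^sub>R y = x" by (simp add: algebra_simps)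
    have "f ((1 - t) *\<^sub>R a + t *\<^sub>R y) \<ge> (1 - t) * f a + t * f y"
      by (rule concave_onD[OF assms(2) t]) (use that a01 in auto)
    moreover have "f y \<le> f a" using fleM fa that a01 by auto
    ultimately have "f x \<ge> (1 - t) * f a + t * f y" using xe by simp
    moreover have "(1 - t) * f a + t * f y \<ge> (1-t) * f y + t * f y"
      using \<open>f y \<le> f a\<close> t by (intro add_right_mono mult_left_mono) auto
    ultimately show ?thesis by (simp add: algebra_simps)
  qed
  have O0: "0 \<in> \<Omega>" using assms(3,5) by (simp add: zero_prod_def)
  have Obd: "\<forall>z\<in>\<Omega>. norm z \<le> 1 + M"
  proof
    fix z assume "z \<in> \<Omega>"
    then obtain y1 y2 where z: "z = (y1, y2)" "0 \<le> y1" "y1 \<le> 1" "\<bar>y2\<bar> \<le> f y1"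
      using assms(5) by auto
    have "norm z \<le> norm (y1, 0::real) + norm (0::real, y2)"
      using norm_triangle_ineq[of "(y1,0::real)" "(0::real,y2)"] z by simp
    also have "\<dots> = \<bar>y1\<bar> + \<bar>y2\<bar>" by (simp add: norm_Pair)
    also have "\<dots> \<le> 1 + M" using z fleM[of y1] by auto
    finally show "norm z \<le> 1 + M" .
  qed
  have U: "z \<bullet> v \<le> c0" if "z \<in> unfolded \<Omega>" "norm v = 1"
      "\<forall>c\<ge>c0. refl_line v c ` upper_part \<Omega> v c \<subseteq> \<Omega>" for z v c0
    using unfolded_le[OF that(1,2)] u_le[OF O0 Obd that(2,3)] by linarith
  show ?thesis
  proof (clarify)
    fix z1 z2 assume z: "(z1, z2) \<in> unfolded \<Omega>"
    have h1: "z2 \<le> 0"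
    proof -
      have "(z1,z2) \<bullet> (0,1) \<le> 0"
      proof (rule U[OF z])
        show "norm (0::real, 1::real) = 1" by (simp add: norm_Pair)
        show "\<forall>c\<ge>0. refl_line (0, 1) c ` upper_part \<Omega> (0, 1) c \<subseteq> \<Omega>"
          using assms(5) by (auto simp: refl_line_def upper_part_def)
      qed
      then show ?thesis by simp
    qed
    have h2: "z2 \<ge> 0"
    proof -
      have "(z1,z2) \<bullet> (0,-1) \<le> 0"
      proof (rule U[OF z])
        show "norm (0::real, -1::real) = 1" by (simp add: norm_Pair)
        show "\<forall>c\<ge>0. refl_line (0, -1) c ` upper_part \<Omega> (0, -1) c \<subseteq> \<Omega>"
          using assms(5) by (auto simp: refl_line_def upper_part_def)
      qed
      then show ?thesis by simp
    qed
    have h3: "z1 \<le> (1 + b) / 2"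
    proof -
      have "(z1,z2) \<bullet> (1,0) \<le> (1 + b) / 2"
      proof (rule U[OF z])
        show "norm (1::real, 0::real) = 1" by (simp add: norm_Pair)
        show "\<forall>c\<ge>(1 + b) / 2. refl_line (1, 0) c ` upper_part \<Omega> (1, 0) c \<subseteq> \<Omega>"
        proof (intro allI impI subsetI)
          fix c w assume c: "(1 + b) / 2 \<le> c" and w: "w \<in> refl_line (1, 0) c ` upper_part \<Omega> (1, 0) c"
          then obtain y1 y2 where y: "0 \<le> y1" "y1 \<le> 1" "\<bar>y2\<bar> \<le> f y1" "y1 \<ge> c"
            and wy: "w = (2*c - y1, y2)"
            using assms(5) by (auto simp: refl_line_def upper_part_def)
          have "f y1 \<le> f (2*c - y1)" by (rule decr) (use c y in auto)
          then show "w \<in> \<Omega>" using assms(5) wy y c b01 by auto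
        qed
      qed
      then show ?thesis by simp
    qed
    have h4: "a / 2 \<le> z1"
    proof -
      have "(z1,z2) \<bullet> (-1,0) \<le> - a / 2"
      proof (rule U[OF z])
        show "norm (-1::real, 0::real) = 1" by (simp add: norm_Pair)
        show "\<forall>c\<ge>- a / 2. refl_line (-1, 0) c ` upper_part \<Omega> (-1, 0) c \<subseteq> \<Omega>"
        proof (intro allI impI subsetI)
          fix c w assume c: "- a / 2 \<le> c" and w: "w \<in> refl_line (-1, 0) c ` upper_part \<Omega> (-1, 0) c"
          then obtain y1 y2 where y: "0 \<le> y1" "y1 \<le> 1" "\<bar>y2\<bar> \<le> f y1" "- y1 \<ge> c"
            and wy: "w = (-2*c - y1, y2)"
            using assms(5) by (auto simp: refl_line_def upper_part_def)
          have "f y1 \<le> f (-2*c - y1)" by (rule incr) (use c y in auto)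
          then show "w \<in> \<Omega>" using assms(5) wy y c a01 by auto
        qed
      qed
      then show ?thesis by simp
    qed
    have "(z1, z2) \<in> \<Omega>" using assms(5) h1 h2 h3 h4 a01 b01 assms(3) by auto
    then show "(z1, z2) \<in> \<Omega> \<and> z2 = 0 \<and> a / 2 \<le> z1 \<and> z1 \<le> (1 + b) / 2"
      using h1 h2 h3 h4 by simp
  qed
qed

end
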